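(* Assume $\delta d_0>2$, let $t=d_0/2$, $\varepsilon_0=\frac{d_0}{2}-\frac1\delta$, and $\gamma=\left(1+\frac ct\right)^{-1}\frac{\delta d_0-1}{d_0-1}\alpha$. Let $G=(L\cup R,E)$ be a $(c,d,\alpha,\delta)$-bipartite expander with $L=[n]$, $C_0\subseteq\mathbb{F}_2^d$ a linear code of minimum distance $d_0$, $x\in\mathbb{F}_2^n$ and $y\in T(G,C_0)$ with $d_H(x,y)\le\gamma n$. Suppose $\mathsf{DeepFlip}(x)$ outputs some $x'\in\mathbb{F}_2^n$ (i.e., not $\perp$). Then $|F(x',y)|\le\frac{d_0-1}{\delta d_0-1}\gamma n$.
   Context: A bipartite graph is $(c,d)$-regular if left degrees are $c$ and right degrees $d$; $N(S)$ is the neighborhood of $S$. A $(c,d,\alpha,\delta)$-bipartite expander ($\alpha,\delta\in(0,1]$) is a $(c,d)$-regular bipartite graph with $|N(S)|\ge\delta c|S|$ for all $S\subseteq L$, $|S|\le\alpha|L|$. Tanner code: $L=[n]$, for each $v\in R$ a fixed ordering of $N(v)$ defines $x_{N(v)}\in\mathbb{F}_2^d$, and $T(G,C_0)=\{x:x_{N(v)}\in C_0\ \forall v\in R\}$. $F(x,y)=\{i\in[n]:x_i\ne y_i\}$; $U(x)=\{v\in R:x_{N(v)}\notin C_0\}$; $d_H$ is Hamming distance. $\mathsf{Decode}(z)$ is the codeword of $C_0$ closest to $z\in\mathbb{F}_2^d$, ties broken lexicographically. $W=\{\frac{i}{cd_0}:i\in\mathbb{Z},0\le i\le cd_0\}$.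 $\mathsf{DeterFlip}(x,q)$: set $p_1=\dots=p_n=0$; for each $v\in R$, let $w_v=\mathsf{Decode}(x_{N(v)})$; if $1\le d_H(w_v,x_{N(v)})<t$, let $i$ be the smallest element of $N(v)$ where $w_v$ and $x_{N(v)}$ differ and increase $p_i$ by $\frac{t-d_H(w_v,x_{N(v)})}{ct}$; then flip every $x_i$ with $p_i=q$ and return the result. $\mathsf{DeepFlip}(x)$: let $\varepsilon=\frac{\varepsilon_0\delta}{2ct^2}$ and $s=\left\lceil\log\left(\frac{\delta d_0-1}{2(d_0-1)}\right)/\log(1-\varepsilon)\right\rceil$; set $k_{\min}=|R|+1$, $x_{\min}=\perp$. For each $(q_1,\dots,q_s)\in(W\setminus\{0\})^s$: set $x^{(0)}=x$ and for $i=1,\dots,s$ set $x^{(i)}=\mathsf{DeterFlip}(x^{(i-1)},q_i)$; if $|U(x^{(i)})|>c\gamma n$ abandon this sequence; otherwise, if $i=s$ and $|U(x^{(s)})|<k_{\min}$, set $k_{\min}=|U(x^{(s)})|$ and $x_{\min}=x^{(s)}$. Return $x_{\min}$. *)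

theory Defs
  imports Complex_Main "HOL-Library.List_Lexorder"
begin

(* Vectors in F_2^m are bool lists of length m (False = 0, True = 1).
   Left vertex set L = [n] is {0..<n}.
   The graph is given by  nb :: 'r => nat => nat : for v in R, the fixed ordering
   of N(v) is  nb v 0, ..., nb v (d-1). *)

definition hdist :: "bool list \<Rightarrow> bool list \<Rightarrow> nat" where
  "hdist a b = card {j. j < length a \<and> a ! j \<noteq> b ! j}"

definition flip_set :: "bool list \<Rightarrow> bool list \<Rightarrow> nat set" where
  "flip_set x y = {i. i < length x \<and> x ! i \<noteq> y ! i}"

definition adj :: "('r \<Rightarrow> nat \<Rightarrow> nat) \<Rightarrow> nat \<Rightarrow> nat \<Rightarrow> 'r \<Rightarrow> bool" where
  "adj nb d i v \<longleftrightarrow> i \<in> nb v ` {..<d}"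

definition nbhd :: "'r set \<Rightarrow> ('r \<Rightarrow> nat \<Rightarrow> nat) \<Rightarrow> nat \<Rightarrow> nat set \<Rightarrow> 'r set" where
  "nbhd R nb d S = {v \<in> R. \<exists>i\<in>S. adj nb d i v}"

definition bip_regular :: "nat \<Rightarrow> 'r set \<Rightarrow> ('r \<Rightarrow> nat \<Rightarrow> nat) \<Rightarrow> nat \<Rightarrow> nat \<Rightarrow> bool" where
  "bip_regular n R nb c d \<longleftrightarrow>
     finite R \<and>
     (\<forall>v\<in>R. inj_on (nb v) {..<d} \<and> (\<forall>j<d. nb v j < n)) \<and>
     (\<forall>i<n. card {v \<in> R. adj nb d i v} = c)"

definition bip_expander :: "nat \<Rightarrow> 'r set \<Rightarrow> ('r \<Rightarrow> nat \<Rightarrow> nat) \<Rightarrow> nat \<Rightarrow> nat \<Rightarrow> real \<Rightarrow> real \<Rightarrow> bool" where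
  "bip_expander n R nb c d \<alpha> \<delta> \<longleftrightarrow>
     bip_regular n R nb c d \<and> 0 < \<alpha> \<and> \<alpha> \<le> 1 \<and> 0 < \<delta> \<and> \<delta> \<le> 1 \<and>
     (\<forall>S. S \<subseteq> {..<n} \<and> real (card S) \<le> \<alpha> * real n \<longrightarrow>
          real (card (nbhd R nb d S)) \<ge> \<delta> * real c * real (card S))"

definition linear_code :: "nat \<Rightarrow> bool list set \<Rightarrow> bool" where
  "linear_code d C0 \<longleftrightarrow> C0 \<subseteq> {w. length w = d} \<and> replicate d False \<in> C0 \<and>
     (\<forall>a\<in>C0. \<forall>b\<in>C0. map2 (\<noteq>) a b \<in> C0)"

definition has_min_distance :: "bool list set \<Rightarrow> nat \<Rightarrow> bool" where
  "has_min_distance C0 d0 \<longleftrightarrow> (\<exists>a\<in>C0. \<exists>b\<in>C0. a \<noteq> b) \<and>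
     d0 = Min {hdist a b | a b. a \<in> C0 \<and> b \<in> C0 \<and> a \<noteq> b}"

definition local_view :: "('r \<Rightarrow> nat \<Rightarrow> nat) \<Rightarrow> nat \<Rightarrow> bool list \<Rightarrow> 'r \<Rightarrow> bool list" where
  "local_view nb d x v = map (\<lambda>j. x ! nb v j) [0..<d]"

definition tanner_code :: "nat \<Rightarrow> 'r set \<Rightarrow> ('r \<Rightarrow> nat \<Rightarrow> nat) \<Rightarrow> nat \<Rightarrow> bool list set \<Rightarrow> bool list set" where
  "tanner_code n R nb d C0 = {x. length x = n \<and> (\<forall>v\<in>R. local_view nb d x v \<in> C0)}"

definition unsat :: "'r set \<Rightarrow> ('r \<Rightarrow> nat \<Rightarrow> nat) \<Rightarrow> nat \<Rightarrow> bool list set \<Rightarrow> bool list \<Rightarrow> 'r set" where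
  "unsat R nb d C0 x = {v \<in> R. local_view nb d x v \<notin> C0}"

(* closest codeword, ties broken lexicographically (False < True) *)
definition decode :: "bool list set \<Rightarrow> bool list \<Rightarrow> bool list" where
  "decode C0 z = Min {w \<in> C0. \<forall>w'\<in>C0. hdist w z \<le> hdist w' z}"

definition first_diff :: "('r \<Rightarrow> nat \<Rightarrow> nat) \<Rightarrow> nat \<Rightarrow> bool list \<Rightarrow> bool list \<Rightarrow> 'r \<Rightarrow> nat" where
  "first_diff nb d w xv v = Min {nb v j | j. j < d \<and> w ! j \<noteq> xv ! j}"

definition deter_p :: "'r set \<Rightarrow> ('r \<Rightarrow> nat \<Rightarrow> nat) \<Rightarrow> nat \<Rightarrow> nat \<Rightarrow> bool list set \<Rightarrow> real
                        \<Rightarrow> bool list \<Rightarrow> nat \<Rightarrow> real" where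
  "deter_p R nb c d C0 t x i =
     (\<Sum>v\<in>R. let xv = local_view nb d x v; w = decode C0 xv; k = hdist w xv in
        if 1 \<le> k \<and> real k < t \<and> i = first_diff nb d w xv v
        then (t - real k) / (real c * t) else 0)"

definition deter_flip :: "'r set \<Rightarrow> ('r \<Rightarrow> nat \<Rightarrow> nat) \<Rightarrow> nat \<Rightarrow> nat \<Rightarrow> bool list set \<Rightarrow> real
                          \<Rightarrow> bool list \<Rightarrow> real \<Rightarrow> bool list" where
  "deter_flip R nb c d C0 t x q =
     map (\<lambda>i. if deter_p R nb c d C0 t x i = q then \<not> x ! i else x ! i) [0..<length x]"

definition flip_traj :: "'r set \<Rightarrow> ('r \<Rightarrow> nat \<Rightarrow> nat) \<Rightarrow> nat \<Rightarrow> nat \<Rightarrow> bool list set \<Rightarrow> real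
                         \<Rightarrow> bool list \<Rightarrow> real list \<Rightarrow> nat \<Rightarrow> bool list" where
  "flip_traj R nb c d C0 t x qs k = foldl (\<lambda>z q. deter_flip R nb c d C0 t z q) x (take k qs)"

definition Wset :: "nat \<Rightarrow> nat \<Rightarrow> real set" where
  "Wset c d0 = {real i / (real c * real d0) | i. i \<le> c * d0}"

definition deep_rounds :: "nat \<Rightarrow> nat \<Rightarrow> real \<Rightarrow> real \<Rightarrow> real \<Rightarrow> nat" where
  "deep_rounds c d0 t \<delta> \<epsilon>0 =
     (let \<epsilon> = \<epsilon>0 * \<delta> / (2 * real c * t ^ 2) in
      nat \<lceil>ln ((\<delta> * real d0 - 1) / (2 * (real d0 - 1))) / ln (1 - \<epsilon>)\<rceil>)"

(* a sequence (q_1..q_s) in (W - {0})^s that is not abandoned *)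
definition deep_valid :: "nat \<Rightarrow> 'r set \<Rightarrow> ('r \<Rightarrow> nat \<Rightarrow> nat) \<Rightarrow> nat \<Rightarrow> nat \<Rightarrow> bool list set \<Rightarrow> nat
                          \<Rightarrow> real \<Rightarrow> real \<Rightarrow> real \<Rightarrow> real \<Rightarrow> bool list \<Rightarrow> real list \<Rightarrow> bool" where
  "deep_valid n R nb c d C0 d0 t \<delta> \<epsilon>0 \<gamma> x qs \<longleftrightarrow>
     (let s = deep_rounds c d0 t \<delta> \<epsilon>0 in
      length qs = s \<and> set qs \<subseteq> Wset c d0 - {0} \<and>
      (\<forall>i\<in>{1..s}. real (card (unsat R nb d C0 (flip_traj R nb c d C0 t x qs i)))
                     \<le> real c * \<gamma> * real n))"

(* DeepFlip(x) returns x' (not \<bottom>): x' = x^(s) for a non-abandoned sequence whose |U(x^(s))|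
   is minimal among all non-abandoned sequences (the enumeration order of (W-{0})^s is left
   unspecified, so every such minimiser is a possible output). *)
definition deep_flip_outputs :: "nat \<Rightarrow> 'r set \<Rightarrow> ('r \<Rightarrow> nat \<Rightarrow> nat) \<Rightarrow> nat \<Rightarrow> nat \<Rightarrow> bool list set \<Rightarrow> nat
                          \<Rightarrow> real \<Rightarrow> real \<Rightarrow> real \<Rightarrow> real \<Rightarrow> bool list \<Rightarrow> bool list \<Rightarrow> bool" where
  "deep_flip_outputs n R nb c d C0 d0 t \<delta> \<epsilon>0 \<gamma> x x' \<longleftrightarrow>
     (let s = deep_rounds c d0 t \<delta> \<epsilon>0 in
      \<exists>qs. deep_valid n R nb c d C0 d0 t \<delta> \<epsilon>0 \<gamma> x qs \<and> x' = flip_traj R nb c d C0 t x qs s \<and>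
        (\<forall>qs'. deep_valid n R nb c d C0 d0 t \<delta> \<epsilon>0 \<gamma> x qs' \<longrightarrow>
           card (unsat R nb d C0 x') \<le> card (unsat R nb d C0 (flip_traj R nb c d C0 t x qs' s))))"

end

theory Submission
  imports Defs
begin

definition degS :: "('r \<Rightarrow> nat \<Rightarrow> nat) \<Rightarrow> nat \<Rightarrow> nat set \<Rightarrow> 'r \<Rightarrow> nat" where
  "degS nb d S v = card {j. j < d \<and> nb v j \<in> S}"

lemma degS_eq_card_adj:
  assumes "inj_on (nb v) {..<d}"
  shows "degS nb d S v = card {i\<in>S. adj nb d i v}"
proof -
  have "{i\<in>S. adj nb d i v} = nb v ` {j. j < d \<and> nb v j \<in> S}"
    by (auto simp: adj_def)
  moreover have "inj_on (nb v) {j. j < d \<and> nb v j \<in> S}"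
    using assms by (rule inj_on_subset) auto
  ultimately show ?thesis by (simp add: degS_def card_image)
qed

lemma card_as_sum: "finite A \<Longrightarrow> card {i\<in>A. P i} = (\<Sum>i\<in>A. if P i then 1 else 0)"
  by (simp add: sum.If_cases Int_def)

lemma sum_degS:
  assumes "bip_regular n R nb c d" "S \<subseteq> {..<n}"
  shows "(\<Sum>v\<in>R. degS nb d S v) = c * card S"
proof -
  have fR: "finite R" using assms(1) by (simp add: bip_regular_def)
  have fS: "finite S" using assms(2) finite_subset by blast
  have "(\<Sum>v\<in>R. degS nb d S v) = (\<Sum>v\<in>R. card {i\<in>S. adj nb d i v})"
    using assms(1) by (intro sum.cong) (auto simp: bip_regular_def degS_eq_card_adj)
  also have "\<dots> = (\<Sum>v\<in>R. \<Sum>i\<in>S. if adj nb d i v then 1 else 0)"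
    using fS by (simp add: card_as_sum)
  also have "\<dots> = (\<Sum>i\<in>S. \<Sum>v\<in>R. if adj nb d i v then 1 else 0)"
    by (rule sum.swap)
  also have "\<dots> = (\<Sum>i\<in>S. card {v\<in>R. adj nb d i v})"
    using fR by (simp add: card_as_sum)
  also have "\<dots> = (\<Sum>i\<in>S. c)"
    using assms by (intro sum.cong) (auto simp: bip_regular_def)
  finally show ?thesis by simp
qed

lemma length_local_view[simp]: "length (local_view nb d x v) = d"
  by (simp add: local_view_def)

lemma nth_local_view[simp]: "j < d \<Longrightarrow> local_view nb d x v ! j = x ! nb v j"
  by (simp add: local_view_def)

lemma hdist_local:
  assumes "length x = n" "length y = n" "\<forall>j<d. nb v j < n"
  shows "hdist (local_view nb d x v) (local_view nb d y v) = degS nb d (flip_set x y) v"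
proof -
  have "{j. j < length (local_view nb d x v) \<and> local_view nb d x v ! j \<noteq> local_view nb d y v ! j}
      = {j. j < d \<and> nb v j \<in> flip_set x y}"
    using assms by (auto simp: flip_set_def)
  then show ?thesis by (simp add: hdist_def degS_def)
qed

lemma hdist_triangle:
  assumes "length a = length b" "length b = length c"
  shows "hdist a c \<le> hdist a b + hdist b c"
proof -
  have "{j. j < length a \<and> a ! j \<noteq> c ! j} \<subseteq> {j. j < length a \<and> a ! j \<noteq> b ! j} \<union> {j. j < length b \<and> b ! j \<noteq> c ! j}"
    using assms by auto
  then have "card {j. j < length a \<and> a ! j \<noteq> c ! j} \<le> card ({j. j < length a \<and> a ! j \<noteq> b ! j} \<union> {j. j < length b \<and> b ! j \<noteq> c ! j})"
    by (intro card_mono) auto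
  also have "\<dots> \<le> card {j. j < length a \<and> a ! j \<noteq> b ! j} + card {j. j < length b \<and> b ! j \<noteq> c ! j}"
    by (rule card_Un_le)
  finally show ?thesis by (simp add: hdist_def)
qed

lemma hdist_pos_neq: "0 < hdist a b \<Longrightarrow> a \<noteq> b"
  by (auto simp: hdist_def)

lemma code_finite: "linear_code d C0 \<Longrightarrow> finite C0"
proof -
  assume a: "linear_code d C0"
  have "finite {w :: bool list. length w = d}"
    using finite_lists_length_eq[of "UNIV :: bool set" d] by simp
  moreover have "C0 \<subseteq> {w. length w = d}" using a by (simp add: linear_code_def)
  ultimately show ?thesis by (rule finite_subset[rotated])
qed

lemma min_dist_le:
  assumes "linear_code d C0" "has_min_distance C0 d0" "a \<in> C0" "b \<in> C0" "a \<noteq> b"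
  shows "d0 \<le> hdist a b"
proof -
  have f: "finite C0" using assms(1) by (rule code_finite)
  have "{hdist a b | a b. a \<in> C0 \<and> b \<in> C0 \<and> a \<noteq> b} \<subseteq> (\<lambda>(a,b). hdist a b) ` (C0 \<times> C0)"
    by auto
  then have "finite {hdist a b | a b. a \<in> C0 \<and> b \<in> C0 \<and> a \<noteq> b}"
    using f by (meson finite_SigmaI finite_imageI finite_subset)
  then show ?thesis using assms(2-5) unfolding has_min_distance_def
    by (metis (mono_tags, lifting) Min_le mem_Collect_eq)
qed

lemma decode_in:
  assumes "linear_code d C0"
  shows "decode C0 z \<in> C0"
proof -
  have f: "finite C0" using assms by (rule code_finite)
  have ne: "C0 \<noteq> {}" using assms by (auto simp: linear_code_def)
  obtain w where w: "w \<in> C0" "hdist w z = Min ((\<lambda>w. hdist w z) ` C0)"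
    using f ne by (metis (no_types, lifting) Min_in finite_imageI image_iff image_is_empty)
  have "w \<in> {w \<in> C0. \<forall>w'\<in>C0. hdist w z \<le> hdist w' z}"
    using w f by auto
  then have "decode C0 z \<in> {w \<in> C0. \<forall>w'\<in>C0. hdist w z \<le> hdist w' z}"
    unfolding decode_def using f by (intro Min_in) auto
  then show ?thesis by auto
qed


lemma unsat_lower:
  assumes exp: "bip_expander n R nb c d \<alpha> \<delta>"
    and lc: "linear_code d C0" and md: "has_min_distance C0 d0"
    and z: "length z = n" and y: "y \<in> tanner_code n R nb d C0"
    and small: "real (card (flip_set z y)) \<le> \<alpha> * real n"
    and d01: "d0 \<ge> 1"
  shows "(\<delta> * real d0 - 1) * real c * real (card (flip_set z y)) \<le> (real d0 - 1) * real (card (unsat R nb d C0 z))"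
proof -
  define S where "S = flip_set z y"
  have reg: "bip_regular n R nb c d" using exp by (simp add: bip_expander_def)
  have fR: "finite R" using reg by (simp add: bip_regular_def)
  have Ssub: "S \<subseteq> {..<n}" using z by (auto simp: S_def flip_set_def)
  have ly: "length y = n" using y by (simp add: tanner_code_def)
  define N where "N = nbhd R nb d S"
  define A where "A = {v\<in>N. degS nb d S v < d0}"
  have NR: "N \<subseteq> R" by (auto simp: N_def nbhd_def)
  have fN: "finite N" using NR fR finite_subset by blast
  have AN: "A \<subseteq> N" by (auto simp: A_def)
  have exp_ineq: "real (card N) \<ge> \<delta> * real c * real (card S)"
    using exp Ssub small unfolding bip_expander_def N_def S_def by blast
  have degpos: "degS nb d S v \<ge> 1" if "v \<in> N" for v
  proof -
    from that obtain i j where "i \<in> S" "j < d" "nb v j = i" by (auto simp: N_def nbhd_def adj_def)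
    then have "{j. j < d \<and> nb v j \<in> S} \<noteq> {}" by auto
    then show ?thesis by (simp add: degS_def Suc_le_eq card_gt_0_iff)
  qed
  have deg0: "degS nb d S v = 0" if "v \<in> R - N" for v
    using that by (auto simp: N_def nbhd_def adj_def degS_def)
  have AU: "A \<subseteq> unsat R nb d C0 z"
  proof
    fix v assume vA: "v \<in> A"
    then have vR: "v \<in> R" using AN NR by auto
    have nbv: "\<forall>j<d. nb v j < n" using reg vR by (simp add: bip_regular_def)
    have hd: "hdist (local_view nb d z v) (local_view nb d y v) = degS nb d S v"
      using hdist_local[of z n y d nb v, OF z ly nbv] by (simp add: S_def)
    have yv: "local_view nb d y v \<in> C0" using y vR by (simp add: tanner_code_def)
    show "v \<in> unsat R nb d C0 z"
    proof (rule ccontr)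
      assume "v \<notin> unsat R nb d C0 z"
      then have zv: "local_view nb d z v \<in> C0" using vR by (simp add: unsat_def)
      have "local_view nb d z v \<noteq> local_view nb d y v"
        using hd degpos[of v] vA AN by (intro hdist_pos_neq) auto
      then have "d0 \<le> degS nb d S v" using min_dist_le[OF lc md zv yv] hd by simp
      then show False using vA by (simp add: A_def)
    qed
  qed
  have fU: "finite (unsat R nb d C0 z)" using fR by (simp add: unsat_def)
  have cardAU: "card A \<le> card (unsat R nb d C0 z)" using AU fU by (rule card_mono[rotated])
  have "(\<Sum>v\<in>R. degS nb d S v) = (\<Sum>v\<in>N. degS nb d S v)"
    using deg0 NR fR by (intro sum.mono_neutral_right) auto
  also have "\<dots> = (\<Sum>v\<in>A. degS nb d S v) + (\<Sum>v\<in>N-A. degS nb d S v)"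
    using fN AN by (metis sum.subset_diff add.commute)
  finally have sumeq: "c * card S = (\<Sum>v\<in>A. degS nb d S v) + (\<Sum>v\<in>N-A. degS nb d S v)"
    using sum_degS[OF reg Ssub] by simp
  have "(\<Sum>v\<in>A. (1::nat)) \<le> (\<Sum>v\<in>A. degS nb d S v)"
    by (rule sum_mono) (use degpos AN in auto)
  then have s1: "card A \<le> (\<Sum>v\<in>A. degS nb d S v)" by simp
  have "(\<Sum>v\<in>N-A. d0) \<le> (\<Sum>v\<in>N-A. degS nb d S v)"
    by (rule sum_mono) (auto simp: A_def)
  then have s2: "d0 * card (N - A) \<le> (\<Sum>v\<in>N-A. degS nb d S v)" by (simp add: mult.commute)
  have cNA: "card (N - A) = card N - card A" using AN fN by (simp add: card_Diff_subset finite_subset)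
  have cAN: "card A \<le> card N" using AN fN by (simp add: card_mono)
  have key: "real c * real (card S) \<ge> real (card A) + real d0 * (real (card N) - real (card A))"
  proof -
    have "card A + d0 * (card N - card A) \<le> c * card S" using sumeq s1 s2 cNA by simp
    then have "real (card A + d0 * (card N - card A)) \<le> real (c * card S)" by linarith
    then show ?thesis using cAN by (simp add: of_nat_diff)
  qed
  have "real d0 * (\<delta> * real c * real (card S)) \<le> real d0 * real (card N)"
    using exp_ineq by (intro mult_left_mono) auto
  then have "(\<delta> * real d0 - 1) * real c * real (card S) \<le> (real d0 - 1) * real (card A)"
    using key by (simp add: algebra_simps)
  also have "\<dots> \<le> (real d0 - 1) * real (card (unsat R nb d C0 z))"
    using cardAU d01 by (intro mult_left_mono) auto
  finally show ?thesis by (simp add: S_def)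
qed


lemma length_deter_flip[simp]: "length (deter_flip R nb c d C0 t x q) = length x"
  by (simp add: deter_flip_def)

lemma nth_deter_flip: "i < length x \<Longrightarrow> deter_flip R nb c d C0 t x q ! i
   = (if deter_p R nb c d C0 t x i = q then \<not> x!i else x!i)"
  by (simp add: deter_flip_def)

lemma flip_growth:
  assumes reg: "bip_regular n R nb c d"
    and lc: "linear_code d C0" and md: "has_min_distance C0 d0"
    and z: "length z = n" and y: "y \<in> tanner_code n R nb d C0"
    and q: "q \<noteq> 0" and t: "t = real d0 / 2" and tpos: "t > 0"
  shows "real (card (flip_set (deter_flip R nb c d C0 t z q) y)) \<le> real (card (flip_set z y)) * (1 + real c / t)"
proof -
  define F where "F = flip_set z y"
  define z' where "z' = deter_flip R nb c d C0 t z q"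
  have fR: "finite R" using reg by (simp add: bip_regular_def)
  have ly: "length y = n" using y by (simp add: tanner_code_def)
  have Fsub: "F \<subseteq> {..<n}" using z by (auto simp: F_def flip_set_def)
  have fF: "finite F" using Fsub finite_subset by blast
  define xv where "xv v = local_view nb d z v" for v
  define w where "w v = decode C0 (xv v)" for v
  define k where "k v = hdist (w v) (xv v)" for v
  define fd where "fd v = first_diff nb d (w v) (xv v) v" for v
  define V where "V = {v\<in>R. 1 \<le> k v \<and> real (k v) < t \<and> fd v \<notin> F}"
  define G where "G = {i. i < n \<and> deter_p R nb c d C0 t z i = q \<and> i \<notin> F}"
  have fV: "finite V" using fR by (simp add: V_def)
  have sub: "flip_set z' y \<subseteq> F \<union> G"
    using z by (auto simp: z'_def F_def G_def flip_set_def nth_deter_flip split: if_splits)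
  have GV: "G \<subseteq> fd ` V"
  proof
    fix i assume iG: "i \<in> G"
    then have "deter_p R nb c d C0 t z i \<noteq> 0" using q by (simp add: G_def)
    then obtain v where vR: "v\<in>R" and nz: "(let xv = local_view nb d z v; w = decode C0 xv; k = hdist w xv in
        if 1 \<le> k \<and> real k < t \<and> i = first_diff nb d w xv v
        then (t - real k) / (real c * t) else 0) \<noteq> 0"
      unfolding deter_p_def by (meson sum.not_neutral_contains_not_neutral)
    then have "1 \<le> k v \<and> real (k v) < t \<and> i = fd v"
      by (auto simp: Let_def k_def w_def xv_def fd_def split: if_splits)
    then show "i \<in> fd ` V" using iG vR by (auto simp: V_def G_def)
  qed
  have Vdeg: "t \<le> real (degS nb d F v)" if vV: "v \<in> V" for v
  proof -
    have vR: "v \<in> R" using vV by (simp add: V_def)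
    have nbv: "\<forall>j<d. nb v j < n" using reg vR by (simp add: bip_regular_def)
    have yv: "local_view nb d y v \<in> C0" using y vR by (simp add: tanner_code_def)
    have wC: "w v \<in> C0" using decode_in[OF lc] by (simp add: w_def)
    have lw: "length (w v) = d" using wC lc by (auto simp: linear_code_def)
    have hd: "hdist (xv v) (local_view nb d y v) = degS nb d F v"
      using hdist_local[of z n y d nb v, OF z ly nbv] by (simp add: F_def xv_def)
    have wy: "w v \<noteq> local_view nb d y v"
    proof
      assume eq: "w v = local_view nb d y v"
      let ?D = "{nb v j | j. j < d \<and> w v ! j \<noteq> xv v ! j}"
      have "card {j. j < length (w v) \<and> w v ! j \<noteq> xv v ! j} \<noteq> 0"
      proof -
        have "1 \<le> k v" using vV by (simp add: V_def)
        then show ?thesis unfolding k_def hdist_def by linarith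
      qed
      then have "{j. j < length (w v) \<and> w v ! j \<noteq> xv v ! j} \<noteq> {}"
        by (metis card.empty)
      then have ne: "?D \<noteq> {}" using lw by auto
      have "?D \<subseteq> nb v ` {..<d}" by auto
      then have fin: "finite ?D" using finite_subset by blast
      have "fd v \<in> ?D" using Min_in[OF fin ne] by (simp add: fd_def first_diff_def)
      then obtain j where "j<d" "fd v = nb v j" "w v ! j \<noteq> xv v ! j" by auto
      then have "fd v \<in> F" using eq nbv z ly by (auto simp: F_def flip_set_def xv_def)
      then show False using vV by (simp add: V_def)
    qed
    have "d0 \<le> hdist (w v) (local_view nb d y v)" by (rule min_dist_le[OF lc md wC yv wy])
    also have "\<dots> \<le> hdist (w v) (xv v) + hdist (xv v) (local_view nb d y v)"
      by (rule hdist_triangle) (simp_all add: lw xv_def)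
    finally have "real d0 \<le> real (k v) + real (degS nb d F v)" using hd by (simp add: k_def)
    moreover have "real (k v) < t" using vV by (simp add: V_def)
    ultimately show ?thesis using t by linarith
  qed
  have "t * real (card V) = (\<Sum>v\<in>V. t)" by simp
  also have "\<dots> \<le> (\<Sum>v\<in>V. real (degS nb d F v))" by (rule sum_mono) (rule Vdeg)
  also have "\<dots> \<le> (\<Sum>v\<in>R. real (degS nb d F v))"
    using fR by (intro sum_mono2) (auto simp: V_def)
  also have "\<dots> = real (c * card F)"
    using sum_degS[OF reg Fsub] by (metis of_nat_sum)
  finally have tV: "t * real (card V) \<le> real c * real (card F)" by simp
  have "card G \<le> card (fd ` V)" using GV fV by (intro card_mono) auto
  also have "\<dots> \<le> card V" using fV by (rule card_image_le)
  finally have "card G \<le> card V" .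
  moreover have "card (flip_set z' y) \<le> card F + card G"
  proof -
    have fG: "finite G" by (simp add: G_def)
    have "card (flip_set z' y) \<le> card (F \<union> G)" using sub fF fG by (intro card_mono) auto
    also have "\<dots> \<le> card F + card G" by (rule card_Un_le)
    finally show ?thesis .
  qed
  ultimately have "real (card (flip_set z' y)) \<le> real (card F) + real (card V)" by linarith
  also have "real (card V) \<le> real c * real (card F) / t" using tV tpos by (simp add: field_simps)
  finally show ?thesis using tpos by (simp add: z'_def F_def field_simps)
qed


lemma flip_traj_0[simp]: "flip_traj R nb c d C0 t x qs 0 = x"
  by (simp add: flip_traj_def)

lemma flip_traj_Suc: "i < length qs \<Longrightarrow> flip_traj R nb c d C0 t x qs (Suc i)
   = deter_flip R nb c d C0 t (flip_traj R nb c d C0 t x qs i) (qs ! i)"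
  by (simp add: flip_traj_def take_Suc_conv_app_nth)

theorem lemma4p5:
  fixes n c d d0 :: nat and R :: "'r set" and nb :: "'r \<Rightarrow> nat \<Rightarrow> nat"
    and C0 :: "bool list set" and \<alpha> \<delta> t \<epsilon>0 \<gamma> :: real and x y x' :: "bool list"
  assumes "\<delta> * real d0 > 2"
    and "t = real d0 / 2"
    and "\<epsilon>0 = real d0 / 2 - 1 / \<delta>"
    and "\<gamma> = inverse (1 + real c / t) * ((\<delta> * real d0 - 1) / (real d0 - 1)) * \<alpha>"
    and "bip_expander n R nb c d \<alpha> \<delta>"
    and "linear_code d C0"
    and "has_min_distance C0 d0"
    and "length x = n"
    and "y \<in> tanner_code n R nb d C0"
    and "real (hdist x y) \<le> \<gamma> * real n"
    and "deep_flip_outputs n R nb c d C0 d0 t \<delta> \<epsilon>0 \<gamma> x x'"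
  shows "real (card (flip_set x' y)) \<le> (real d0 - 1) / (\<delta> * real d0 - 1) * \<gamma> * real n"
proof -
  note dt = assms(1) and tdef = assms(2) and gdef = assms(4) and exp = assms(5)
    and lc = assms(6) and md = assms(7) and lx = assms(8) and y = assms(9) and hxy = assms(10)
  define s where "s = deep_rounds c d0 t \<delta> \<epsilon>0"
  from assms(11) obtain qs where val: "deep_valid n R nb c d C0 d0 t \<delta> \<epsilon>0 \<gamma> x qs"
      and x': "x' = flip_traj R nb c d C0 t x qs s"
    unfolding deep_flip_outputs_def s_def Let_def by blast
  have lqs: "length qs = s" and qs0: "set qs \<subseteq> Wset c d0 - {0}"
    and U: "\<forall>i\<in>{1..s}. real (card (unsat R nb d C0 (flip_traj R nb c d C0 t x qs i))) \<le> real c * \<gamma> * real n"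
    using val by (simp_all add: deep_valid_def s_def Let_def)
  have reg: "bip_regular n R nb c d" and al: "\<alpha> > 0" and dl: "\<delta> \<le> 1" and dp: "\<delta> > 0"
    using exp by (simp_all add: bip_expander_def)
  have "real d0 \<ge> \<delta> * real d0" using dl mult_right_mono[OF dl, of "real d0"] by simp
  then have d0gt: "real d0 > 2" using dt by linarith
  have tpos: "t > 0" using d0gt tdef by simp
  have num: "\<delta> * real d0 - 1 > 0" using dt by simp
  have den: "real d0 - 1 > 0" using d0gt by simp
  have numden: "\<delta> * real d0 - 1 \<le> real d0 - 1" using \<open>real d0 \<ge> \<delta> * real d0\<close> by simp
  define B where "B = (real d0 - 1) / (\<delta> * real d0 - 1) * \<gamma> * real n"
  have ct: "1 + real c / t > 0" using tpos by (simp add: add_pos_nonneg)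
  have gpos: "\<gamma> \<ge> 0" using gdef ct num den al by simp
  have Bal: "B * (1 + real c / t) = \<alpha> * real n"
  proof -
    have gen: "\<And>a b K :: real. a \<noteq> 0 \<Longrightarrow> b \<noteq> 0 \<Longrightarrow> K \<noteq> 0 \<Longrightarrow>
       a / b * (inverse K * (b / a) * \<alpha>) * real n * K = \<alpha> * real n"
      by (simp add: field_simps)
    show ?thesis unfolding B_def gdef using gen[of "real d0 - 1" "\<delta> * real d0 - 1" "1 + real c / t"] ct num den
      by simp
  qed
  have gB: "\<gamma> * real n \<le> B"
  proof -
    have "1 \<le> (real d0 - 1) / (\<delta> * real d0 - 1)" using num numden by simp
    then have "1 * (\<gamma> * real n) \<le> (real d0 - 1) / (\<delta> * real d0 - 1) * (\<gamma> * real n)"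
      using gpos by (intro mult_right_mono) auto
    then show ?thesis by (simp add: B_def mult.assoc)
  qed
  have traj: "length (flip_traj R nb c d C0 t x qs i) = n \<and>
      real (card (flip_set (flip_traj R nb c d C0 t x qs i) y)) \<le> B" if "i \<le> s" for i
    using that
  proof (induction i)
    case 0
    have "card (flip_set x y) = hdist x y" by (simp add: flip_set_def hdist_def)
    then show ?case using lx hxy gB by simp
  next
    case (Suc i)
    then have il: "i < length qs" using lqs by simp
    let ?z = "flip_traj R nb c d C0 t x qs i"
    let ?z' = "flip_traj R nb c d C0 t x qs (Suc i)"
    have IH: "length ?z = n" "real (card (flip_set ?z y)) \<le> B" using Suc by auto
    have z'eq: "?z' = deter_flip R nb c d C0 t ?z (qs ! i)" by (rule flip_traj_Suc[OF il])
    have q: "qs ! i \<noteq> 0" using qs0 nth_mem[OF il] by auto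
    have lz': "length ?z' = n" using z'eq IH by simp
    have "real (card (flip_set ?z' y)) \<le> real (card (flip_set ?z y)) * (1 + real c / t)"
      unfolding z'eq by (rule flip_growth[OF reg lc md IH(1) y q tdef tpos])
    also have "\<dots> \<le> B * (1 + real c / t)" using IH(2) ct by (intro mult_right_mono) auto
    finally have g: "real (card (flip_set ?z' y)) \<le> B * (1 + real c / t)" .
    then have small: "real (card (flip_set ?z' y)) \<le> \<alpha> * real n" using Bal by simp
    have d01: "d0 \<ge> 1" using d0gt by simp
    have lo: "(\<delta> * real d0 - 1) * real c * real (card (flip_set ?z' y)) \<le> (real d0 - 1) * real (card (unsat R nb d C0 ?z'))"
      by (rule unsat_lower[OF exp lc md lz' y small d01])
    have up: "real (card (unsat R nb d C0 ?z')) \<le> real c * \<gamma> * real n"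
      using U Suc.prems by auto
    have "real (card (flip_set ?z' y)) \<le> B"
    proof (cases "c = 0")
      case True then show ?thesis using g by simp
    next
      case False
      then have cp: "real c > 0" by simp
      have "(\<delta> * real d0 - 1) * real c * real (card (flip_set ?z' y)) \<le> (real d0 - 1) * (real c * \<gamma> * real n)"
        using lo up den by (meson mult_left_mono less_imp_le order_trans)
      then have "real c * ((\<delta> * real d0 - 1) * real (card (flip_set ?z' y))) \<le> real c * ((real d0 - 1) * \<gamma> * real n)"
        by (simp add: algebra_simps)
      then have "(\<delta> * real d0 - 1) * real (card (flip_set ?z' y)) \<le> (real d0 - 1) * \<gamma> * real n"
        using cp by simp
      then show ?thesis unfolding B_def using num by (simp add: field_simps)
    qed
    then show ?case using lz' by simp
  qed
  show ?thesis using traj[of s] x' by (simp add: B_def)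
qed

end
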